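(* Fix a $2\times 2$ unitary matrix $C_0=\begin{bmatrix} a & b\\ c & d\end{bmatrix}$ with $abcd\neq 0$ and a frequency $\xi\in\mathbb{R}$, and put $\omega=\arg(\det C_0)/2+\xi$. Suppose $|\cos\omega|>|a|$. Let $\lambda_+$ be the root with $|\lambda_+|>1$ of $\lambda^2-2\frac{\cos\omega}{|a|}\lambda+1=0$. Then for every $j\in\{0,1,2,\dots\}$, \[\lim_{M\to\infty}\mu_M(j)=(1-\lambda_+^{-2})\lambda_+^{-2j},\] where $\mu_M$ is the distribution of the comfortability of the walk with path length $M$ described in the context.
   Context: Notation: $|L\rangle=[1,0]^\top$, $|R\rangle=[0,1]^\top$. For an integer $M\ge1$ and $j\in\mathbb{Z}$ set $C(j)=C_0$ if $j\in\{0,\dots,M-1\}$ and $C(j)=I$ otherwise, and $P(j)=|L\rangle\langle L|C(j)$, $Q(j)=|R\rangle\langle R|C(j)$. The operator $U_M$ acts on uniformly bounded functions $\psi:\mathbb{Z}\to\mathbb{C}^2$ by $(U_M\psi)(j)=P(j+1)\psi(j+1)+Q(j-1)\psi(j-1)$. The initial state is $\psi_0(j)=e^{i\xi j}|R\rangle$ for $j\le 0$ and $\psi_0(j)=0$ for $j>0$, and $\psi_t=U_M^t\psi_0$. The state $e^{i\xi t}\psi_t$ converges pointwise to a stationary state as $t\to\infty$, and the distribution of the comfortability is $\mu_M(j)=\lim_{t\to\infty}\frac{\|\psi_t(j)\|^2}{\sum_{k=0}^{M-1}\|\psi_t(k)\|^2}$ for $j\in\{0,\dots,M-1\}$ (for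 fixed $j$ this is defined once $M>j$). *)

theory Defs
  imports "HOL-Analysis.Analysis"
begin

text \<open>Vectors in C^2 are pairs (L-component, R-component).
  The 2x2 coin C0 = [[a,b],[c,d]] is given by its four entries.\<close>

definition unitary2 :: "complex \<Rightarrow> complex \<Rightarrow> complex \<Rightarrow> complex \<Rightarrow> bool" where
  "unitary2 a b c d \<longleftrightarrow>
     cnj a * a + cnj c * c = 1 \<and> cnj a * b + cnj c * d = 0 \<and>
     cnj b * a + cnj d * c = 0 \<and> cnj b * b + cnj d * d = 1"

definition coin_apply ::
  "nat \<Rightarrow> complex \<Rightarrow> complex \<Rightarrow> complex \<Rightarrow> complex \<Rightarrow> int \<Rightarrow> complex \<times> complex \<Rightarrow> complex \<times> complex" where
  "coin_apply M a b c d j v =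
     (if 0 \<le> j \<and> j < int M then (a * fst v + b * snd v, c * fst v + d * snd v) else v)"

text \<open>(U_M psi)(j) = P(j+1) psi(j+1) + Q(j-1) psi(j-1), with
  P(j) = |L><L| C(j), Q(j) = |R><R| C(j).\<close>
definition U_walk ::
  "nat \<Rightarrow> complex \<Rightarrow> complex \<Rightarrow> complex \<Rightarrow> complex \<Rightarrow> (int \<Rightarrow> complex \<times> complex) \<Rightarrow> int \<Rightarrow> complex \<times> complex" where
  "U_walk M a b c d psi j =
     (fst (coin_apply M a b c d (j + 1) (psi (j + 1))),
      snd (coin_apply M a b c d (j - 1) (psi (j - 1))))"

definition psi0 :: "real \<Rightarrow> int \<Rightarrow> complex \<times> complex" where
  "psi0 \<xi> j = (if j \<le> 0 then (0, exp (\<i> * complex_of_real (\<xi> * of_int j))) else (0, 0))"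

definition psi_t ::
  "nat \<Rightarrow> complex \<Rightarrow> complex \<Rightarrow> complex \<Rightarrow> complex \<Rightarrow> real \<Rightarrow> nat \<Rightarrow> int \<Rightarrow> complex \<times> complex" where
  "psi_t M a b c d \<xi> t = (U_walk M a b c d ^^ t) (psi0 \<xi>)"

definition sqnorm2 :: "complex \<times> complex \<Rightarrow> real" where
  "sqnorm2 v = (cmod (fst v))\<^sup>2 + (cmod (snd v))\<^sup>2"

text \<open>The ratio whose t -> infinity limit is mu_M(j).\<close>
definition comf_ratio ::
  "nat \<Rightarrow> complex \<Rightarrow> complex \<Rightarrow> complex \<Rightarrow> complex \<Rightarrow> real \<Rightarrow> nat \<Rightarrow> nat \<Rightarrow> real" where
  "comf_ratio M a b c d \<xi> j t =
     sqnorm2 (psi_t M a b c d \<xi> t (int j)) /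
     (\<Sum>k<M. sqnorm2 (psi_t M a b c d \<xi> t (int k)))"

end

theory Submission
  imports Defs
begin


lemma unit_facts:
  assumes U: "unitary2 a b c d" and nz: "a*b*c*d \<noteq> 0"
  shows "d = (a*d-b*c)*cnj a" "c = -(a*d-b*c)*cnj b" "cmod (a*d-b*c) = 1"
proof -
  have u1: "cnj a * a + cnj c * c = 1" and u2: "cnj a * b + cnj c * d = 0"
   and u3: "cnj b * a + cnj d * c = 0" and u4: "cnj b * b + cnj d * d = 1"
    using U unfolding unitary2_def by auto
  show d: "d = (a*d-b*c)*cnj a"
  proof -
    have "d - (a*d-b*c)*cnj a = d*(1 - cnj a * a) + c * (cnj a * b)" by (simp add: algebra_simps)
    also have "1 - cnj a * a = cnj c * c" by (simp add: u1[symmetric])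
    also have "d * (cnj c * c) + c * (cnj a * b) = c * (cnj c * d + cnj a * b)" by (simp add: algebra_simps)
    also have "\<dots> = 0" using u2 by (simp add: add.commute)
    finally show ?thesis by simp
  qed
  show c: "c = -(a*d-b*c)*cnj b"
  proof -
    have "c + (a*d-b*c)*cnj b = c*(1 - cnj b * b) + d * (cnj b * a)" by (simp add: algebra_simps)
    also have "1 - cnj b * b = cnj d * d" by (simp add: u4[symmetric])
    also have "c * (cnj d * d) + d * (cnj b * a) = d * (cnj d * c + cnj b * a)" by (simp add: algebra_simps)
    also have "\<dots> = 0" using u3 by (simp add: add.commute)
    finally have "c = - ((a*d-b*c)*cnj b)" by (simp only: eq_neg_iff_add_eq_0)
    thus ?thesis by (simp only: mult_minus_left)
  qed
  define D where "D = a*d-b*c"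
  have Dnz: "D \<noteq> 0" using d nz unfolding D_def by auto
  have dD: "d = D * cnj a" and cD: "c = - D * cnj b" using d c unfolding D_def by auto
  have "D = a * d - b * c" by (simp add: D_def)
  also have "\<dots> = D * (cnj a * a + cnj b * b)" 
    by (simp add: dD cD algebra_simps)
  finally have "D * 1 = D * (cnj a * a + cnj b * b)" by simp
  hence ab: "cnj a * a + cnj b * b = 1" using Dnz by (metis mult_left_cancel)
  have "cnj a * a + cnj c * c = cnj a * a + (D * cnj D) * (cnj b * b)"
    by (simp add: cD algebra_simps)
  hence "(D * cnj D) * (cnj b * b) + cnj a * a = 1" using u1 by (simp add: add.commute)
  hence e1: "(D * cnj D) * (cnj b * b) = 1 - cnj a * a" by (simp add: eq_diff_eq)
  have e2: "cnj b * b = 1 - cnj a * a" using ab by (simp add: eq_diff_eq add.commute)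
  have "(D * cnj D - 1) * (cnj b * b) = (D * cnj D) * (cnj b * b) - cnj b * b" by (simp add: left_diff_distrib)
  also have "\<dots> = 0" by (subst e1, subst e2, simp)
  finally have "(D * cnj D - 1) * (cnj b * b) = 0" .
  moreover have "cnj b * b \<noteq> 0" using nz by auto
  ultimately have "D * cnj D = 1" by simp
  hence "complex_of_real ((cmod D)^2) = 1" by (simp only: complex_norm_square)
  hence "(cmod D)^2 = 1" by (metis of_real_eq_1_iff)
  thus "cmod (a*d-b*c) = 1" unfolding D_def using norm_ge_zero[of "a*d-b*c"] by (auto simp add: power2_eq_1_iff)
qed




definition nb :: "nat \<Rightarrow> (nat \<Rightarrow> complex \<times> complex) \<Rightarrow> real" where
  "nb M u = (\<Sum>k<M. sqnorm2 (u k))"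

definition homw :: "nat \<Rightarrow> complex \<Rightarrow> complex \<Rightarrow> complex \<Rightarrow> complex \<Rightarrow> (nat \<Rightarrow> nat \<Rightarrow> complex \<times> complex) \<Rightarrow> bool" where
  "homw M a b c d w \<longleftrightarrow>
    (\<forall>t k. Suc k < M \<longrightarrow> fst (w (Suc t) k) = a * fst (w t (Suc k)) + b * snd (w t (Suc k))) \<and>
    (\<forall>t. fst (w (Suc t) (M - 1)) = 0) \<and>
    (\<forall>t k. Suc k < M \<longrightarrow> snd (w (Suc t) (Suc k)) = c * fst (w t k) + d * snd (w t k)) \<and>
    (\<forall>t. snd (w (Suc t) 0) = 0)"

lemma unit_pres:
  assumes U: "unitary2 a b c d"
  shows "(cmod (a*x+b*y))\<^sup>2 + (cmod (c*x+d*y))\<^sup>2 = (cmod x)\<^sup>2 + (cmod y)\<^sup>2"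
proof -
  have u1: "cnj a * a + cnj c * c = 1" and u2: "cnj a * b + cnj c * d = 0"
   and u3: "cnj b * a + cnj d * c = 0" and u4: "cnj b * b + cnj d * d = 1"
    using U unfolding unitary2_def by auto
  have "complex_of_real ((cmod (a*x+b*y))\<^sup>2 + (cmod (c*x+d*y))\<^sup>2)
      = (a*x+b*y)*cnj(a*x+b*y) + (c*x+d*y)*cnj(c*x+d*y)" by (simp only: of_real_add complex_norm_square)
  also have "\<dots> = x*cnj x*(cnj a*a + cnj c*c) + y*cnj y*(cnj b*b+cnj d*d)
        + x*cnj y*(cnj b*a + cnj d*c) + y*cnj x*(cnj a*b + cnj c*d)"
    by (simp add: algebra_simps)
  also have "\<dots> = x*cnj x + y*cnj y" using u1 u2 u3 u4 by simp
  also have "\<dots> = complex_of_real ((cmod x)\<^sup>2 + (cmod y)\<^sup>2)" by (simp only: of_real_add complex_norm_square)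
  finally show ?thesis by (simp only: of_real_eq_iff)
qed

lemma unit_le1:
  assumes U: "unitary2 a b c d"
  shows "cmod a \<le> 1" "cmod b \<le> 1" "cmod c \<le> 1" "cmod d \<le> 1"
proof -
  have "(cmod a)\<^sup>2 + (cmod c)\<^sup>2 = 1" using unit_pres[OF U, of 1 0] by simp
  moreover have "(cmod b)\<^sup>2 + (cmod d)\<^sup>2 = 1" using unit_pres[OF U, of 0 1] by simp
  ultimately show "cmod a \<le> 1" "cmod b \<le> 1" "cmod c \<le> 1" "cmod d \<le> 1"
    by (smt (verit) norm_ge_zero power2_le_imp_le zero_le_power2 one_power2)+
qed

lemma sq_bound:
  assumes "cmod c \<le> 1" "cmod d \<le> 1"
  shows "(cmod (c*x+d*y))\<^sup>2 \<le> 2*((cmod x)\<^sup>2+(cmod y)\<^sup>2)"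
proof -
  have "cmod (c*x+d*y) \<le> cmod c * cmod x + cmod d * cmod y"
    by (metis norm_mult norm_triangle_ineq)
  also have "\<dots> \<le> cmod x + cmod y" using assms
    by (simp add: add_mono mult_left_le_one_le)
  finally have h: "cmod (c*x+d*y) \<le> cmod x + cmod y" .
  have "(cmod (c*x+d*y))\<^sup>2 \<le> (cmod x + cmod y)\<^sup>2" using h by (simp add: power_mono)
  also have "\<dots> \<le> 2*((cmod x)\<^sup>2+(cmod y)\<^sup>2)"
    using zero_le_power2[of "cmod x - cmod y"] by (simp add: power2_eq_square algebra_simps)
  finally show ?thesis .
qed

lemma energy:
  assumes U: "unitary2 a b c d" and H: "homw (Suc m) a b c d w"
  shows "nb (Suc m) (w (Suc t)) = nb (Suc m) (w t)
     - (cmod (a*fst (w t 0)+b* snd (w t 0)))\<^sup>2 - (cmod (c*fst (w t m)+d* snd (w t m)))\<^sup>2"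
proof -
  define A where "A k = (cmod (a*fst (w t k)+b* snd (w t k)))\<^sup>2" for k
  define C where "C k = (cmod (c*fst (w t k)+d* snd (w t k)))\<^sup>2" for k
  have HL: "\<And>k. Suc k < Suc m \<Longrightarrow> fst (w (Suc t) k) = a * fst (w t (Suc k)) + b * snd (w t (Suc k))"
   and HL': "fst (w (Suc t) m) = 0"
   and HR: "\<And>k. Suc k < Suc m \<Longrightarrow> snd (w (Suc t) (Suc k)) = c * fst (w t k) + d * snd (w t k)"
   and HR': "snd (w (Suc t) 0) = 0"
    using H unfolding homw_def by auto
  have "nb (Suc m) (w t) = (\<Sum>k<Suc m. A k + C k)"
    unfolding nb_def A_def C_def sqnorm2_def using unit_pres[OF U] by simp
  also have "\<dots> = (\<Sum>k<Suc m. A k) + (\<Sum>k<Suc m. C k)" by (simp add: sum.distrib)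
  also have "(\<Sum>k<Suc m. A k) = A 0 + (\<Sum>k<m. A (Suc k))" by (rule sum.lessThan_Suc_shift)
  also have "(\<Sum>k<Suc m. C k) = (\<Sum>k<m. C k) + C m" by simp
  finally have e1: "nb (Suc m) (w t) = A 0 + (\<Sum>k<m. A (Suc k)) + ((\<Sum>k<m. C k) + C m)" .
  have "nb (Suc m) (w (Suc t)) = (\<Sum>k<Suc m. (cmod (fst (w (Suc t) k)))\<^sup>2) + (\<Sum>k<Suc m. (cmod (snd (w (Suc t) k)))\<^sup>2)"
    unfolding nb_def sqnorm2_def by (simp add: sum.distrib)
  also have "(\<Sum>k<Suc m. (cmod (fst (w (Suc t) k)))\<^sup>2) = (\<Sum>k<m. (cmod (fst (w (Suc t) k)))\<^sup>2) + (cmod (fst (w (Suc t) m)))\<^sup>2"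
    by simp
  also have "(\<Sum>k<m. (cmod (fst (w (Suc t) k)))\<^sup>2) = (\<Sum>k<m. A (Suc k))"
    by (rule sum.cong) (auto simp: A_def HL)
  also have "(\<Sum>k<Suc m. (cmod (snd (w (Suc t) k)))\<^sup>2) = (cmod (snd (w (Suc t) 0)))\<^sup>2 + (\<Sum>k<m. (cmod (snd (w (Suc t) (Suc k))))\<^sup>2)"
    by (rule sum.lessThan_Suc_shift)
  also have "(\<Sum>k<m. (cmod (snd (w (Suc t) (Suc k))))\<^sup>2) = (\<Sum>k<m. C k)"
    by (rule sum.cong) (auto simp: C_def HR)
  finally have e2: "nb (Suc m) (w (Suc t)) = (\<Sum>k<m. A (Suc k)) + (\<Sum>k<m. C k)"
    using HL' HR' by simp
  show ?thesis using e1 e2 unfolding A_def C_def by linarith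
qed




lemma nb_nonneg: "0 \<le> nb M u"
  unfolding nb_def sqnorm2_def by (intro sum_nonneg) auto

lemma sqnorm2_nonneg: "0 \<le> sqnorm2 v"
  unfolding sqnorm2_def by auto

lemma contraction:
  assumes U: "unitary2 a b c d" and a0: "a \<noteq> 0" and H: "homw (Suc m) a b c d w"
    and K_def: "K = 2 + 4 / (cmod a)\<^sup>2"
    and C_def: "C = (\<Sum>k<Suc m. (2*K)^k) / (cmod a)\<^sup>2"
  shows "nb (Suc m) (w (2 * Suc m)) \<le> C / (1 + C) * nb (Suc m) (w 0)"
proof -
  define M where "M = Suc m"
  define P where "P n k = sqnorm2 (w n k)" for n k
  define leak where "leak n = (cmod (a*fst (w n 0)+b * snd (w n 0)))\<^sup>2 + (cmod (c*fst (w n m)+d * snd (w n m)))\<^sup>2" for n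
  define \<alpha> where "\<alpha> = (cmod a)\<^sup>2"
  have \<alpha>pos: "\<alpha> > 0" using a0 unfolding \<alpha>_def by simp
  have HL: "\<And>t k. Suc k < M \<Longrightarrow> fst (w (Suc t) k) = a * fst (w t (Suc k)) + b * snd (w t (Suc k))"
   and HR: "\<And>t k. Suc k < M \<Longrightarrow> snd (w (Suc t) (Suc k)) = c * fst (w t k) + d * snd (w t k)"
   and HR': "\<And>t. snd (w (Suc t) 0) = 0"
    using H unfolding homw_def M_def by auto
  have le1: "cmod b \<le> 1" "cmod c \<le> 1" "cmod d \<le> 1" using unit_le1[OF U] by auto
  have tele: "nb M (w n) = nb M (w 0) - (\<Sum>i<n. leak i)" for n
  proof (induction n)
    case 0 then show ?case by simp
  next
    case (Suc n)
    show ?case using energy[OF U H, of n] Suc unfolding M_def leak_def by simp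
  qed
  have leak_nn: "0 \<le> leak i" for i unfolding leak_def by simp
  have dec: "decseq (\<lambda>n. nb M (w n))"
  proof (rule decseq_SucI)
    fix n
    have "(\<Sum>i<Suc n. leak i) = (\<Sum>i<n. leak i) + leak n" by simp
    thus "nb M (w (Suc n)) \<le> nb M (w n)" using tele[of "Suc n"] tele[of n] leak_nn[of n] by linarith
  qed
  have Pnn: "0 \<le> P n k" for n k unfolding P_def by (rule sqnorm2_nonneg)
  have propg: "P (Suc n) (Suc k) \<le> K * (P n k + P (Suc (Suc n)) k)" if sk: "Suc k < M" for n k
  proof -
    define R where "R = snd (w (Suc n) (Suc k))"
    define L where "L = fst (w (Suc n) (Suc k))"
    define L2 where "L2 = fst (w (Suc (Suc n)) k)"
    have R: "R = c * fst (w n k) + d * snd (w n k)" unfolding R_def using HR[OF sk] .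
    have R2: "(cmod R)\<^sup>2 \<le> 2 * P n k" unfolding R P_def sqnorm2_def
      using sq_bound[OF le1(2,3)] by blast
    have "L2 = a * L + b * R" unfolding L2_def L_def R_def using HL[OF sk] .
    hence "a * L = 1 * L2 + (-b) * R" by simp
    hence "(cmod (a * L))\<^sup>2 \<le> 2 * ((cmod L2)\<^sup>2 + (cmod R)\<^sup>2)"
      using sq_bound[of 1 "-b" L2 R] le1(1) by simp
    hence "\<alpha> * (cmod L)\<^sup>2 \<le> 2 * ((cmod L2)\<^sup>2 + (cmod R)\<^sup>2)"
      unfolding \<alpha>_def by (simp add: norm_mult power_mult_distrib)
    moreover have "(cmod L2)\<^sup>2 \<le> P (Suc (Suc n)) k" unfolding L2_def P_def sqnorm2_def by simp
    ultimately have "\<alpha> * (cmod L)\<^sup>2 \<le> 2 * P (Suc (Suc n)) k + 4 * P n k" using R2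
      by (simp only: distrib_left)
    hence L2b: "(cmod L)\<^sup>2 \<le> (2 * P (Suc (Suc n)) k + 4 * P n k) / \<alpha>"
      using \<alpha>pos by (simp add: pos_le_divide_eq mult.commute)
    have "(2 * P (Suc (Suc n)) k + 4 * P n k) / \<alpha> \<le> (4 * P (Suc (Suc n)) k + 4 * P n k) / \<alpha>"
      using \<alpha>pos Pnn[of "Suc (Suc n)" k] by (intro divide_right_mono) auto
    moreover have "K * (P n k + P (Suc (Suc n)) k) = 2 * (P n k + P (Suc (Suc n)) k) + (4 * P (Suc (Suc n)) k + 4 * P n k) / \<alpha>"
      unfolding K_def \<alpha>_def using \<alpha>pos unfolding \<alpha>_def by (simp add: field_simps)
    moreover have "P (Suc n) (Suc k) = (cmod L)\<^sup>2 + (cmod R)\<^sup>2" unfolding P_def sqnorm2_def L_def R_def by simp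
    ultimately show ?thesis using L2b R2 Pnn[of "Suc (Suc n)" k] by (smt (verit))
  qed
  define S where "S = (\<Sum>i\<in>{1..<2*M}. P i 0)"
  have Kpos: "K \<ge> 1" unfolding K_def by simp
  have bound: "\<forall>n. k < M \<longrightarrow> Suc k \<le> n \<longrightarrow> n + k < 2*M \<longrightarrow> P n k \<le> (2*K)^k * S" for k
  proof (induction k)
    case 0
    show ?case
    proof (intro allI impI)
      fix n assume "0 < M" "Suc 0 \<le> n" "n + 0 < 2*M"
      hence "n \<in> {1..<2*M}" by auto
      hence "P n 0 \<le> S" unfolding S_def by (intro member_le_sum) (use Pnn in auto)
      thus "P n 0 \<le> (2*K)^0 * S" by simp
    qed
  next
    case (Suc k)
    show ?case
    proof (intro allI impI)
      fix n assume h: "Suc k < M" "Suc (Suc k) \<le> n" "n + Suc k < 2*M"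
      then obtain n' where n': "n = Suc n'" by (cases n) auto
      have i1: "P n' k \<le> (2*K)^k * S" using Suc.IH h n' by auto
      have i2: "P (Suc (Suc n')) k \<le> (2*K)^k * S" using Suc.IH h n' by auto
      have "P n (Suc k) \<le> K * (P n' k + P (Suc (Suc n')) k)" using propg[OF h(1)] n' by simp
      also have "\<dots> \<le> K * ((2*K)^k * S + (2*K)^k * S)" using add_mono[OF i1 i2] Kpos by (intro mult_left_mono) auto
      also have "\<dots> = (2*K)^(Suc k) * S" by (simp add: algebra_simps)
      finally show "P n (Suc k) \<le> (2*K)^(Suc k) * S" .
    qed
  qed
  have Snn: "0 \<le> S" unfolding S_def using Pnn by (simp add: sum_nonneg)
  have "nb M (w M) = (\<Sum>k<M. P M k)" unfolding nb_def P_def by simp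
  also have "\<dots> \<le> (\<Sum>k<M. (2*K)^k * S)"
    by (rule sum_mono) (use bound in auto)
  also have "\<dots> = (\<Sum>k<M. (2*K)^k) * S" by (simp add: sum_distrib_right)
  finally have nbM: "nb M (w M) \<le> (\<Sum>k<M. (2*K)^k) * S" .
  have Pleak: "P i 0 \<le> leak i / \<alpha>" if hi: "i \<in> {1..<2*M}" for i
  proof -
    obtain i' where i': "i = Suc i'" using hi by (cases i) auto
    have s0: "snd (w i 0) = 0" using HR' i' by simp
    have "\<alpha> * P i 0 = (cmod (a * fst (w i 0) + b * snd (w i 0)))\<^sup>2"
      unfolding P_def sqnorm2_def \<alpha>_def s0 by (simp add: norm_mult power_mult_distrib)
    also have "\<dots> \<le> leak i" unfolding leak_def by simp
    finally show ?thesis using \<alpha>pos by (simp add: pos_le_divide_eq mult.commute)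
  qed
  have "S \<le> (\<Sum>i\<in>{1..<2*M}. leak i / \<alpha>)" unfolding S_def by (rule sum_mono) (rule Pleak)
  also have "\<dots> \<le> (\<Sum>i<2*M. leak i / \<alpha>)"
    by (rule sum_mono2) (use leak_nn \<alpha>pos in auto)
  also have "\<dots> = (\<Sum>i<2*M. leak i) / \<alpha>" by (simp add: sum_divide_distrib)
  also have "\<dots> = (nb M (w 0) - nb M (w (2*M))) / \<alpha>" using tele[of "2*M"] by simp
  finally have Sb: "S \<le> (nb M (w 0) - nb M (w (2*M))) / \<alpha>" .
  have mono2: "nb M (w (2*M)) \<le> nb M (w M)" using decseqD[OF dec, of M "2*M"] by simp
  have G0: "0 \<le> (\<Sum>k<M. (2*K)^k)" using Kpos by (intro sum_nonneg) auto
  have Ceq: "C = (\<Sum>k<M. (2*K)^k) / \<alpha>" unfolding C_def M_def \<alpha>_def by simp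
  have "nb M (w (2*M)) \<le> (\<Sum>k<M. (2*K)^k) * ((nb M (w 0) - nb M (w (2*M))) / \<alpha>)"
    using mono2 nbM mult_left_mono[OF Sb G0] by linarith
  hence X: "nb M (w (2*M)) \<le> C * (nb M (w 0) - nb M (w (2*M)))" unfolding Ceq by simp
  have C0: "0 \<le> C" unfolding Ceq using G0 \<alpha>pos by simp
  have "nb M (w (2*M)) * (1 + C) \<le> C * nb M (w 0)" using X by (simp add: algebra_simps)
  hence "nb M (w (2*M)) \<le> C * nb M (w 0) / (1 + C)" using C0 by (simp add: pos_le_divide_eq)
  thus ?thesis unfolding M_def by simp
qed

lemma homw_shift:
  assumes "homw M a b c d w"
  shows "homw M a b c d (\<lambda>t. w (t + N))"
  using assms unfolding homw_def by simp

lemma decay: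
  assumes U: "unitary2 a b c d" and a0: "a \<noteq> 0" and H: "homw (Suc m) a b c d w"
  shows "(\<lambda>t. nb (Suc m) (w t)) \<longlonglongrightarrow> 0"
proof -
  define K where "K = 2 + 4 / (cmod a)\<^sup>2"
  define C where "C = (\<Sum>k<Suc m. (2*K)^k) / (cmod a)\<^sup>2"
  define q where "q = C / (1 + C)"
  define M where "M = Suc m"
  have C0: "0 \<le> C" unfolding C_def K_def by (intro divide_nonneg_pos sum_nonneg) (auto simp: a0)
  have q0: "0 \<le> q" "q < 1" unfolding q_def using C0 by auto
  have step: "nb M (w (2*M + N)) \<le> q * nb M (w N)" for N
    using contraction[OF U a0 homw_shift[OF H, of N] K_def C_def] unfolding q_def M_def
    by (simp add: add.commute)
  have it: "nb M (w (2*M*i)) \<le> q^i * nb M (w 0)" for i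
  proof (induction i)
    case 0 then show ?case by simp
  next
    case (Suc i)
    have "nb M (w (2*M*Suc i)) = nb M (w (2*M + 2*M*i))" by (simp add: algebra_simps)
    also have "\<dots> \<le> q * nb M (w (2*M*i))" by (rule step)
    also have "\<dots> \<le> q * (q^i * nb M (w 0))" using Suc q0 by (intro mult_left_mono) auto
    finally show ?case by simp
  qed
  have tele: "decseq (\<lambda>n. nb M (w n))"
    by (rule decseq_SucI) (use energy[OF U H[folded M_def[symmetric]]] in \<open>simp add: M_def\<close>)
  show ?thesis
  proof (rule LIMSEQ_I)
    fix r :: real assume r: "0 < r"
    have "(\<lambda>i. q^i * nb M (w 0)) \<longlonglongrightarrow> 0 * nb M (w 0)"
      by (intro tendsto_intros) (use q0 in simp)
    hence "eventually (\<lambda>i. q^i * nb M (w 0) < r) sequentially"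
      using r by (intro order_tendstoD(2)) auto
    then obtain i where i: "q^i * nb M (w 0) < r" by (auto simp: eventually_sequentially)
    show "\<exists>no. \<forall>n\<ge>no. norm (nb (Suc m) (w n) - 0) < r"
    proof (intro exI allI impI)
      fix n assume "2*M*i \<le> n"
      hence "nb M (w n) \<le> nb M (w (2*M*i))" using decseqD[OF tele] by blast
      thus "norm (nb (Suc m) (w n) - 0) < r" using it[of i] i nb_nonneg[of M "w n"] unfolding M_def by simp
    qed
  qed
qed




lemma psi_Suc: "psi_t M a b c d \<xi> (Suc t) = U_walk M a b c d (psi_t M a b c d \<xi> t)"
  unfolding psi_t_def by simp

lemma exterior:
  assumes M1: "1 \<le> M"
  shows "\<forall>j. (j \<le> -1 \<longrightarrow> snd (psi_t M a b c d \<xi> t j) = exp (\<i> * of_real (\<xi> * of_int (j - int t)))) \<and>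
             (int M \<le> j \<longrightarrow> fst (psi_t M a b c d \<xi> t j) = 0)"
proof (induction t)
  case 0
  show ?case using M1 by (auto simp: psi_t_def psi0_def)
next
  case (Suc t)
  show ?case
  proof (intro allI conjI impI)
    fix j :: int
    assume j: "j \<le> -1"
    have "snd (psi_t M a b c d \<xi> (Suc t) j) = snd (psi_t M a b c d \<xi> t (j - 1))"
      using j by (simp add: psi_Suc U_walk_def coin_apply_def)
    also have "\<dots> = exp (\<i> * of_real (\<xi> * of_int (j - 1 - int t)))" using Suc.IH j by auto
    also have "j - 1 - int t = j - int (Suc t)" by simp
    finally show "snd (psi_t M a b c d \<xi> (Suc t) j) = exp (\<i> * of_real (\<xi> * of_int (j - int (Suc t))))" .
  next
    fix j :: int
    assume j: "int M \<le> j"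
    have "fst (psi_t M a b c d \<xi> (Suc t) j) = fst (psi_t M a b c d \<xi> t (j + 1))"
      using j by (simp add: psi_Suc U_walk_def coin_apply_def)
    also have "\<dots> = 0" using Suc.IH j by auto
    finally show "fst (psi_t M a b c d \<xi> (Suc t) j) = 0" .
  qed
qed

definition phiw :: "nat \<Rightarrow> complex \<Rightarrow> complex \<Rightarrow> complex \<Rightarrow> complex \<Rightarrow> real \<Rightarrow> nat \<Rightarrow> nat \<Rightarrow> complex \<times> complex" where
  "phiw M a b c d \<xi> t k = (exp (\<i> * of_real (\<xi> * real t)) * fst (psi_t M a b c d \<xi> t (int k)),
                          exp (\<i> * of_real (\<xi> * real t)) * snd (psi_t M a b c d \<xi> t (int k)))"

lemma sqnorm2_phiw: "sqnorm2 (phiw M a b c d \<xi> t k) = sqnorm2 (psi_t M a b c d \<xi> t (int k))"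
  unfolding phiw_def sqnorm2_def by (simp add: norm_mult)

lemma E_Suc: "exp (\<i> * of_real (\<xi> * real (Suc t))) = exp (\<i> * of_real \<xi>) * exp (\<i> * of_real (\<xi> * real t))"
proof -
  have "\<i> * of_real (\<xi> * real (Suc t)) = \<i> * of_real \<xi> + \<i> * of_real (\<xi> * real t)"
    by (simp add: algebra_simps)
  thus ?thesis by (simp only: exp_add)
qed

lemma phiw_rec:
  fixes M t k :: nat and a b c d :: complex and \<xi> :: real
  assumes M1: "1 \<le> M" and k: "k < M"
  defines "e \<equiv> exp (\<i> * of_real \<xi>)"
  shows "fst (phiw M a b c d \<xi> (Suc t) k) = (if Suc k < M then (e*a) * fst (phiw M a b c d \<xi> t (Suc k)) + (e*b) * snd (phiw M a b c d \<xi> t (Suc k)) else 0)"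
    and "snd (phiw M a b c d \<xi> (Suc t) k) = (if k = 0 then 1 else (e*c) * fst (phiw M a b c d \<xi> t (k - 1)) + (e*d) * snd (phiw M a b c d \<xi> t (k - 1)))"
proof -
  define E where "E = exp (\<i> * of_real (\<xi> * real t))"
  have ES: "exp (\<i> * of_real (\<xi> * real (Suc t))) = e * E" unfolding e_def E_def by (rule E_Suc)
  have ext: "\<forall>j. (j \<le> -1 \<longrightarrow> snd (psi_t M a b c d \<xi> t j) = exp (\<i> * of_real (\<xi> * of_int (j - int t)))) \<and>
             (int M \<le> j \<longrightarrow> fst (psi_t M a b c d \<xi> t j) = 0)" by (rule exterior[OF M1])
  show "fst (phiw M a b c d \<xi> (Suc t) k) = (if Suc k < M then (e*a) * fst (phiw M a b c d \<xi> t (Suc k)) + (e*b) * snd (phiw M a b c d \<xi> t (Suc k)) else 0)"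
  proof (cases "Suc k < M")
    case True
    have "fst (psi_t M a b c d \<xi> (Suc t) (int k)) = a * fst (psi_t M a b c d \<xi> t (int (Suc k))) + b * snd (psi_t M a b c d \<xi> t (int (Suc k)))"
      using True by (simp add: psi_Suc U_walk_def coin_apply_def add.commute)
    thus ?thesis using True unfolding phiw_def ES E_def[symmetric] by (simp add: algebra_simps)
  next
    case False
    hence "int k + 1 = int M" using k by simp
    hence "fst (psi_t M a b c d \<xi> (Suc t) (int k)) = fst (psi_t M a b c d \<xi> t (int M))"
      by (simp add: psi_Suc U_walk_def coin_apply_def)
    also have "\<dots> = 0" using ext by auto
    finally show ?thesis using False unfolding phiw_def by simp
  qed
  show "snd (phiw M a b c d \<xi> (Suc t) k) = (if k = 0 then 1 else (e*c) * fst (phiw M a b c d \<xi> t (k - 1)) + (e*d) * snd (phiw M a b c d \<xi> t (k - 1)))"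
  proof (cases "k = 0")
    case True
    have "snd (psi_t M a b c d \<xi> (Suc t) 0) = snd (psi_t M a b c d \<xi> t (-1))"
      by (simp add: psi_Suc U_walk_def coin_apply_def)
    also have "\<dots> = exp (\<i> * of_real (\<xi> * of_int (-1 - int t)))" using ext by auto
    finally have s: "snd (psi_t M a b c d \<xi> (Suc t) 0) = exp (\<i> * of_real (\<xi> * of_int (-1 - int t)))" .
    have "exp (\<i> * of_real (\<xi> * real (Suc t))) * exp (\<i> * of_real (\<xi> * of_int (-1 - int t)))
        = exp (\<i> * of_real (\<xi> * real (Suc t)) + \<i> * of_real (\<xi> * of_int (-1 - int t)))"
      by (simp only: exp_add)
    also have "\<i> * of_real (\<xi> * real (Suc t)) + \<i> * of_real (\<xi> * of_int (-1 - int t)) = 0"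
      by (simp add: algebra_simps)
    finally have "exp (\<i> * of_real (\<xi> * real (Suc t))) * exp (\<i> * of_real (\<xi> * of_int (-1 - int t))) = 1" by simp
    thus ?thesis using True s unfolding phiw_def by simp
  next
    case False
    then obtain k' where k': "k = Suc k'" by (cases k) auto
    have "snd (psi_t M a b c d \<xi> (Suc t) (int k)) = c * fst (psi_t M a b c d \<xi> t (int k')) + d * snd (psi_t M a b c d \<xi> t (int k'))"
      using k k' by (simp add: psi_Suc U_walk_def coin_apply_def)
    thus ?thesis using False k' unfolding phiw_def ES E_def[symmetric] by (simp add: algebra_simps)
  qed
qed




locale qw =
  fixes a b c d :: complex and \<xi> \<omega> lam :: real
  assumes U: "unitary2 a b c d"
    and nz: "a * b * c * d \<noteq> 0"
    and om: "\<omega> = Arg (a * d - b * c) / 2 + \<xi>"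
    and cg: "\<bar>cos \<omega>\<bar> > cmod a"
    and lq: "lam\<^sup>2 - 2 * (cos \<omega> / cmod a) * lam + 1 = 0"
    and lg: "\<bar>lam\<bar> > 1"
begin

definition "e = exp (\<i> * of_real \<xi>)"
definition "ap = e * a"
definition "bp = e * b"
definition "cp = e * c"
definition "dp = e * d"
definition "z = cis \<omega>"
definition "s = z * of_real (cmod a) / ap"
definition "mp = s * of_real lam"
definition "mm = s / of_real lam"
definition "pp = mp - dp"
definition "pm = mm - dp"

lemma nz': "a \<noteq> 0" "b \<noteq> 0" "c \<noteq> 0" "d \<noteq> 0" using nz by auto

lemma e_cis: "e = cis \<xi>" unfolding e_def by (simp add: cis_conv_exp)

lemma e_norm: "cmod e = 1" unfolding e_cis by simp

lemma e_nz: "e \<noteq> 0" using e_norm by auto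

lemma nzp: "ap \<noteq> 0" "bp \<noteq> 0" "cp \<noteq> 0" "dp \<noteq> 0"
  unfolding ap_def bp_def cp_def dp_def using nz' e_nz by auto

lemma cmod_ap: "cmod ap = cmod a" unfolding ap_def by (simp add: norm_mult e_norm)

lemma Up: "unitary2 ap bp cp dp"
proof -
  have ee: "cnj e * e = 1" using e_norm by (metis complex_norm_square mult.commute of_real_1 power_one)
  have h: "cnj (e*x) * (e*y) = cnj x * y" for x y
  proof -
    have "cnj (e*x) * (e*y) = (cnj e * e) * (cnj x * y)" by (simp only: complex_cnj_mult mult_ac)
    thus ?thesis using ee by simp
  qed
  show ?thesis using U unfolding unitary2_def ap_def bp_def cp_def dp_def h .
qed

lemma z_norm: "cmod z = 1" unfolding z_def by simp

lemma z_cnj: "z * cnj z = 1"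
  using z_norm by (metis complex_norm_square of_real_1 power_one)

lemma z_re: "z + cnj z = 2 * of_real (cos \<omega>)"
  unfolding z_def by (simp add: complex_eq_iff)

lemma one_plus_z2: "1 + z * z = z * (2 * of_real (cos \<omega>))"
proof -
  have "1 + z * z = z * cnj z + z * z" using z_cnj by simp
  also have "\<dots> = z * (z + cnj z)" by (simp add: algebra_simps)
  finally show ?thesis using z_re by simp
qed

lemma Delta_facts: "cmod (a*d - b*c) = 1" "d = (a*d-b*c) * cnj a"
  using unit_facts[OF U nz] by auto

lemma Delta_cis: "cis (Arg (a*d - b*c)) = a*d - b*c"
proof -
  have nz0: "a*d - b*c \<noteq> 0" using Delta_facts(1) by auto
  have "cis (Arg (a*d - b*c)) = sgn (a*d - b*c)" by (rule cis_Arg[OF nz0])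
  also have "\<dots> = a*d - b*c" using Delta_facts(1) by (simp add: sgn_div_norm)
  finally show ?thesis .
qed

lemma zz: "z * z = e * e * (a*d - b*c)"
proof -
  have "z * z = cis (2 * \<omega>)" unfolding z_def by (simp add: cis_mult)
  also have "2 * \<omega> = Arg (a*d - b*c) + 2 * \<xi>" using om by simp
  also have "cis (Arg (a*d - b*c) + 2 * \<xi>) = cis (Arg (a*d - b*c)) * (cis \<xi> * cis \<xi>)"
    by (simp add: cis_mult)
  finally show ?thesis unfolding Delta_cis e_cis by simp
qed

lemma Deltap: "ap * dp - bp * cp = z * z"
  unfolding zz ap_def bp_def cp_def dp_def by (simp add: algebra_simps)

lemma apdp: "ap * dp = z * z * of_real ((cmod a)\<^sup>2)"
proof -
  have "a * d = (a*d - b*c) * (a * cnj a)"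
    by (subst (1) Delta_facts(2)) (simp add: algebra_simps)
  also have "a * cnj a = of_real ((cmod a)\<^sup>2)" by (simp only: complex_norm_square)
  finally have h: "a * d = (a*d - b*c) * of_real ((cmod a)\<^sup>2)" .
  have "ap * dp = e * e * (a * d)" unfolding ap_def dp_def by (simp add: algebra_simps)
  also have "\<dots> = e * e * ((a*d - b*c) * of_real ((cmod a)\<^sup>2))" by (subst h) (rule refl)
  also have "\<dots> = z * z * of_real ((cmod a)\<^sup>2)" unfolding zz by (simp add: algebra_simps)
  finally show ?thesis .
qed

lemma quad:
  fixes x :: real
  assumes hx: "x\<^sup>2 - 2 * (cos \<omega> / cmod a) * x + 1 = 0"
  shows "ap * (s * of_real x)\<^sup>2 - (1 + (ap * dp - bp * cp)) * (s * of_real x) + dp = 0"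
proof -
  define A where "A = cmod a"
  define cw where "cw = cos \<omega>"
  have A0: "A \<noteq> 0" unfolding A_def using nz' by simp
  have r: "A * x * x - 2 * cw * x + A = 0"
  proof -
    have "A * (x\<^sup>2 - 2 * (cw / A) * x + 1) = 0" using hx unfolding A_def cw_def by simp
    thus ?thesis using A0 by (simp add: algebra_simps power2_eq_square)
  qed
  have dp_eq: "dp = z * z * of_real (A * A) / ap"
    using apdp nzp(1) unfolding A_def by (simp add: field_simps power2_eq_square)
  have "ap * (s * of_real x)\<^sup>2 - (1 + (ap * dp - bp * cp)) * (s * of_real x) + dp
      = (z * z * of_real A / ap) * of_real (A * x * x - 2 * cw * x + A)"
  proof -
    have "1 + (ap * dp - bp * cp) = z * (2 * of_real cw)" unfolding Deltap one_plus_z2 cw_def ..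
    thus ?thesis
      unfolding dp_eq s_def A_def[symmetric]
      using nzp(1) by (simp add: field_simps power2_eq_square)
  qed
  also have "\<dots> = 0" using r by simp
  finally show ?thesis .
qed

end




definition sc :: "complex \<Rightarrow> complex \<times> complex \<Rightarrow> complex \<times> complex" where
  "sc w v = (w * fst v, w * snd v)"

lemma sqnorm2_norm: "sqnorm2 v = (norm v)\<^sup>2"
  by (cases v) (simp add: sqnorm2_def norm_Pair)

lemma norm_sc: "norm (sc w v) = cmod w * norm v"
proof -
  have "norm (sc w v) = sqrt ((cmod w)\<^sup>2 * ((cmod (fst v))\<^sup>2 + (cmod (snd v))\<^sup>2))"
    unfolding sc_def by (simp add: norm_Pair norm_mult power_mult_distrib distrib_left)
  also have "\<dots> = cmod w * norm v"
    by (cases v) (simp add: real_sqrt_mult norm_Pair)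
  finally show ?thesis .
qed

context qw
begin

lemma lam_nz: "lam \<noteq> 0" using lg by auto

lemma quad_inv: "(1/lam)\<^sup>2 - 2 * (cos \<omega> / cmod a) * (1/lam) + 1 = 0"
proof -
  have "(1/lam)\<^sup>2 - 2 * (cos \<omega> / cmod a) * (1/lam) + 1 = (lam\<^sup>2 - 2 * (cos \<omega> / cmod a) * lam + 1) / lam\<^sup>2"
    using lam_nz by (simp add: field_simps power2_eq_square)
  thus ?thesis using lq by simp
qed

lemma quad_mp: "ap * mp\<^sup>2 - (1 + (ap * dp - bp * cp)) * mp + dp = 0"
  unfolding mp_def by (rule quad[OF lq])

lemma quad_mm: "ap * mm\<^sup>2 - (1 + (ap * dp - bp * cp)) * mm + dp = 0"
proof -
  have "mm = s * of_real (1/lam)" unfolding mm_def by (simp add: divide_inverse of_real_inverse)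
  thus ?thesis using quad[OF quad_inv] by simp
qed

lemma s_norm: "cmod s = 1"
  unfolding s_def using z_norm cmod_ap nz' by (simp add: norm_mult norm_divide)

lemma mp_norm: "cmod mp = \<bar>lam\<bar>" unfolding mp_def by (simp add: norm_mult s_norm)
lemma mm_norm: "cmod mm = 1 / \<bar>lam\<bar>" unfolding mm_def by (simp add: norm_divide s_norm)

lemma p_nz:
  assumes "ap * \<mu>\<^sup>2 - (1 + (ap * dp - bp * cp)) * \<mu> + dp = 0"
  shows "\<mu> - dp \<noteq> 0"
proof
  assume "\<mu> - dp = 0"
  hence "\<mu> = dp" by simp
  hence "ap * \<mu>\<^sup>2 - (1 + (ap * dp - bp * cp)) * \<mu> + dp = dp * (bp * cp)"
    by (simp add: algebra_simps power2_eq_square)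
  thus False using assms nzp by simp
qed

lemma pp_nz: "pp \<noteq> 0" unfolding pp_def by (rule p_nz[OF quad_mp])
lemma pm_nz: "pm \<noteq> 0" unfolding pm_def by (rule p_nz[OF quad_mm])

definition V :: "complex \<Rightarrow> complex \<Rightarrow> nat \<Rightarrow> complex \<times> complex" where
  "V \<mu> p k = (\<mu>^k * (p / cp), \<mu>^k)"

lemma eigR:
  assumes "p = \<mu> - dp"
  shows "snd (V \<mu> p (Suc k)) = cp * fst (V \<mu> p k) + dp * snd (V \<mu> p k)"
  unfolding V_def assms using nzp by (simp add: field_simps)

lemma eigL:
  assumes q: "ap * \<mu>\<^sup>2 - (1 + (ap * dp - bp * cp)) * \<mu> + dp = 0" and p: "p = \<mu> - dp"
  shows "fst (V \<mu> p k) = ap * fst (V \<mu> p (Suc k)) + bp * snd (V \<mu> p (Suc k))"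
proof -
  define Dl where "Dl = ap * dp - bp * cp"
  have q': "ap * \<mu>\<^sup>2 = (1 + Dl) * \<mu> - dp"
  proof -
    have "ap * \<mu>\<^sup>2 = (ap * \<mu>\<^sup>2 - (1 + Dl) * \<mu> + dp) + ((1 + Dl) * \<mu> - dp)" by simp
    also have "ap * \<mu>\<^sup>2 - (1 + Dl) * \<mu> + dp = 0" using q unfolding Dl_def .
    finally show ?thesis by simp
  qed
  have key: "\<mu> * (ap * p + bp * cp) = p"
  proof -
    have "\<mu> * (ap * p + bp * cp) = ap * \<mu>\<^sup>2 - Dl * \<mu>"
      unfolding p Dl_def by (simp add: algebra_simps power2_eq_square)
    also have "\<dots> = ((1 + Dl) * \<mu> - dp) - Dl * \<mu>" by (simp only: q')
    also have "\<dots> = p" unfolding p by (simp add: algebra_simps)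
    finally show ?thesis .
  qed
  have "ap * fst (V \<mu> p (Suc k)) + bp * snd (V \<mu> p (Suc k)) = \<mu>^k * (\<mu> * (ap * p + bp * cp)) / cp"
    unfolding V_def using nzp by (simp add: field_simps)
  also have "\<dots> = fst (V \<mu> p k)" unfolding key V_def by simp
  finally show ?thesis by simp
qed

lemma norm_V: "norm (V \<mu> p k) = (cmod \<mu>)^k * norm (p / cp, 1::complex)"
proof -
  have "V \<mu> p k = sc (\<mu>^k) (p / cp, 1)" unfolding V_def sc_def by simp
  thus ?thesis by (simp add: norm_sc norm_power)
qed

end




context qw
begin

definition comb :: "complex \<Rightarrow> complex \<Rightarrow> nat \<Rightarrow> complex \<times> complex" where
  "comb \<alpha> \<beta> k = (\<alpha> * fst (V mp pp k) + \<beta> * fst (V mm pm k), \<alpha> * snd (V mp pp k) + \<beta> * snd (V mm pm k))"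

lemma comb_L: "fst (comb \<alpha> \<beta> k) = ap * fst (comb \<alpha> \<beta> (Suc k)) + bp * snd (comb \<alpha> \<beta> (Suc k))"
proof -
  have e1: "fst (V mp pp k) = ap * fst (V mp pp (Suc k)) + bp * snd (V mp pp (Suc k))"
    by (rule eigL[OF quad_mp pp_def])
  have e2: "fst (V mm pm k) = ap * fst (V mm pm (Suc k)) + bp * snd (V mm pm (Suc k))"
    by (rule eigL[OF quad_mm pm_def])
  show ?thesis unfolding comb_def fst_conv snd_conv e1 e2 by (simp add: algebra_simps)
qed

lemma comb_R: "snd (comb \<alpha> \<beta> (Suc k)) = cp * fst (comb \<alpha> \<beta> k) + dp * snd (comb \<alpha> \<beta> k)"
proof -
  have e1: "snd (V mp pp (Suc k)) = cp * fst (V mp pp k) + dp * snd (V mp pp k)"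
    by (rule eigR[OF pp_def])
  have e2: "snd (V mm pm (Suc k)) = cp * fst (V mm pm k) + dp * snd (V mm pm k)"
    by (rule eigR[OF pm_def])
  have "snd (comb \<alpha> \<beta> (Suc k)) = \<alpha> * snd (V mp pp (Suc k)) + \<beta> * snd (V mm pm (Suc k))"
    unfolding comb_def by (rule snd_conv)
  also have "\<dots> = \<alpha> * (cp * fst (V mp pp k) + dp * snd (V mp pp k)) + \<beta> * (cp * fst (V mm pm k) + dp * snd (V mm pm k))"
    by (simp only: e1 e2)
  also have "\<dots> = cp * (\<alpha> * fst (V mp pp k) + \<beta> * fst (V mm pm k)) + dp * (\<alpha> * snd (V mp pp k) + \<beta> * snd (V mm pm k))"
    by algebra
  also have "\<dots> = cp * fst (comb \<alpha> \<beta> k) + dp * snd (comb \<alpha> \<beta> k)"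
    unfolding comb_def by simp
  finally show ?thesis .
qed

lemma comb_const_homw:
  assumes "fst (comb \<alpha> \<beta> m) = 0" "snd (comb \<alpha> \<beta> 0) = 0"
  shows "homw (Suc m) ap bp cp dp (\<lambda>t. comb \<alpha> \<beta>)"
  unfolding homw_def by (intro conjI allI impI comb_L comb_R) (use assms in auto)

definition "Dm m = pp * mp^m - pm * mm^m"

lemma mp_nz: "mp \<noteq> 0" using mp_norm lg by auto
lemma mm_nz: "mm \<noteq> 0" using mm_norm lg by auto

lemma lam_pow_gt: "m > 0 \<Longrightarrow> \<bar>lam\<bar>^m * \<bar>lam\<bar>^m > 1"
  using lg by (metis less_1_mult one_less_power order_less_imp_le)

lemma Dm_nz: "Dm m \<noteq> 0"
proof (cases m)
  case 0
  show ?thesis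
  proof
    assume "Dm m = 0"
    hence "mp = mm" unfolding Dm_def 0 pp_def pm_def by simp
    hence "\<bar>lam\<bar> = 1 / \<bar>lam\<bar>" using mp_norm mm_norm by simp
    hence "\<bar>lam\<bar> * \<bar>lam\<bar> = 1" using lg by (simp add: field_simps)
    moreover have "\<bar>lam\<bar> * \<bar>lam\<bar> > 1" using lg by (metis less_1_mult order_less_imp_le)
    ultimately show False by simp
  qed
next
  case (Suc m')
  show ?thesis
  proof
    assume D0: "Dm m = 0"
    define W where "W = comb (pm * mm^m) (-(pp * mp^m))"
    have "fst (W m) = pm*mm^m*(mp^m*(pp/cp)) - pp*mp^m*(mm^m*(pm/cp))"
      unfolding W_def comb_def V_def by simp
    also have "\<dots> = 0" by (simp add: algebra_simps)
    finally have f: "fst (W m) = 0" .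
    have s: "snd (W 0) = 0" using D0 unfolding W_def comb_def V_def Dm_def by simp
    have H: "homw (Suc m) ap bp cp dp (\<lambda>t. W)" unfolding W_def
      by (rule comb_const_homw) (use f s W_def in auto)
    have "(\<lambda>t. nb (Suc m) W) \<longlonglongrightarrow> 0" using decay[OF Up nzp(1) H] .
    hence nb0: "nb (Suc m) W = 0" by (simp add: LIMSEQ_const_iff)
    have "sqnorm2 (W 0) \<le> nb (Suc m) W" unfolding nb_def
      by (rule member_le_sum) (auto simp: sqnorm2_nonneg)
    hence "sqnorm2 (W 0) = 0" using nb0 sqnorm2_nonneg[of "W 0"] by simp
    hence "fst (W 0) = 0" unfolding sqnorm2_def by (simp add: add_nonneg_eq_0_iff)
    moreover have "cp * fst (W 0) = pp * pm * (mm^m - mp^m)"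
      unfolding W_def comb_def V_def using nzp(3) by (simp add: field_simps)
    ultimately have "pp * pm * (mm^m - mp^m) = 0" by simp
    hence "mm^m - mp^m = 0" using pp_nz pm_nz by simp
    hence "mm^m = mp^m" by simp
    hence "(1 / \<bar>lam\<bar>)^m = \<bar>lam\<bar>^m" using mp_norm mm_norm by (metis norm_power)
    hence "\<bar>lam\<bar>^m * \<bar>lam\<bar>^m = 1" using lg by (simp add: power_one_over field_simps)
    thus False using lam_pow_gt[of m] Suc by simp
  qed
qed

definition "al m = -(pm * mm^m) / Dm m"
definition "be m = pp * mp^m / Dm m"
definition "vst m = comb (al m) (be m)"

lemma vst_R0: "snd (vst m 0) = 1"
proof -
  have "snd (vst m 0) = al m + be m" unfolding vst_def comb_def V_def by simp
  also have "\<dots> = (pp * mp^m - pm * mm^m) / Dm m" unfolding al_def be_def by (simp add: diff_divide_distrib)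
  also have "\<dots> = 1" using Dm_nz[of m] unfolding Dm_def by simp
  finally show ?thesis .
qed

lemma frac_aux:
  fixes x1 y1 p1 z1 w1 q1 D1 c1 :: complex
  assumes "D1 \<noteq> 0" "c1 \<noteq> 0"
  shows "(-x1/D1) * (y1 * (p1/c1)) + (z1/D1) * (w1*(q1/c1)) = (z1*w1*q1 - x1*y1*p1)/(D1*c1)"
  using assms by (simp add: field_simps)

lemma vst_Lm: "fst (vst m m) = 0"
proof -
  have "fst (vst m m) = (-(pm * mm^m)/Dm m) * (mp^m * (pp/cp)) + (pp * mp^m/Dm m) * (mm^m * (pm/cp))"
    unfolding vst_def comb_def V_def al_def be_def by simp
  also have "\<dots> = (pp * mp^m * mm^m * pm - pm * mm^m * mp^m * pp) / (Dm m * cp)"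
    by (rule frac_aux[OF Dm_nz nzp(3)])
  also have "pp * mp^m * mm^m * pm - pm * mm^m * mp^m * pp = 0" by (simp only: mult_ac diff_self)
  finally show ?thesis by simp
qed

end




context qw
begin

lemma tlim_v:
  assumes j: "j < Suc m"
  shows "(\<lambda>t. comf_ratio (Suc m) a b c d \<xi> j t) \<longlonglongrightarrow> sqnorm2 (vst m j) / (\<Sum>k<Suc m. sqnorm2 (vst m k))"
proof -
  define phi where "phi = phiw (Suc m) a b c d \<xi>"
  define w where "w t k = phi t k - vst m k" for t k
  have PR1: "fst (phi (Suc t) k) = (if Suc k < Suc m then ap * fst (phi t (Suc k)) + bp * snd (phi t (Suc k)) else 0)"
    if "k < Suc m" for t k
    using phiw_rec(1)[of "Suc m" k] that unfolding phi_def ap_def bp_def e_def by simp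
  have PR2: "snd (phi (Suc t) k) = (if k = 0 then 1 else cp * fst (phi t (k - 1)) + dp * snd (phi t (k - 1)))"
    if "k < Suc m" for t k
    using phiw_rec(2)[of "Suc m" k] that unfolding phi_def cp_def dp_def e_def by simp
  have H: "homw (Suc m) ap bp cp dp w"
    unfolding homw_def
  proof (intro conjI allI impI)
    fix t k assume k: "Suc k < Suc m"
    have p1: "fst (phi (Suc t) k) = ap * fst (phi t (Suc k)) + bp * snd (phi t (Suc k))"
      using PR1[of k t] k by simp
    have v1: "fst (vst m k) = ap * fst (vst m (Suc k)) + bp * snd (vst m (Suc k))"
      unfolding vst_def by (rule comb_L)
    have "fst (w (Suc t) k) = fst (phi (Suc t) k) - fst (vst m k)" unfolding w_def by simp
    also have "\<dots> = (ap * fst (phi t (Suc k)) + bp * snd (phi t (Suc k))) - (ap * fst (vst m (Suc k)) + bp * snd (vst m (Suc k)))"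
      by (simp only: p1 v1)
    also have "\<dots> = ap * fst (w t (Suc k)) + bp * snd (w t (Suc k))" unfolding w_def by (simp add: algebra_simps)
    finally show "fst (w (Suc t) k) = ap * fst (w t (Suc k)) + bp * snd (w t (Suc k))" .
  next
    fix t
    show "fst (w (Suc t) (Suc m - 1)) = 0" unfolding w_def using PR1[of m t] vst_Lm[of m] by simp
  next
    fix t k assume k: "Suc k < Suc m"
    have p2: "snd (phi (Suc t) (Suc k)) = cp * fst (phi t k) + dp * snd (phi t k)"
      using PR2[of "Suc k" t] k by simp
    have v2: "snd (vst m (Suc k)) = cp * fst (vst m k) + dp * snd (vst m k)"
      unfolding vst_def by (rule comb_R)
    have "snd (w (Suc t) (Suc k)) = snd (phi (Suc t) (Suc k)) - snd (vst m (Suc k))" unfolding w_def by simp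
    also have "\<dots> = (cp * fst (phi t k) + dp * snd (phi t k)) - (cp * fst (vst m k) + dp * snd (vst m k))"
      by (simp only: p2 v2)
    also have "\<dots> = cp * fst (w t k) + dp * snd (w t k)" unfolding w_def by (simp add: algebra_simps)
    finally show "snd (w (Suc t) (Suc k)) = cp * fst (w t k) + dp * snd (w t k)" .
  next
    fix t
    show "snd (w (Suc t) 0) = 0" unfolding w_def using PR2[of 0 t] vst_R0[of m] by simp
  qed
  have nb0: "(\<lambda>t. nb (Suc m) (w t)) \<longlonglongrightarrow> 0" by (rule decay[OF Up nzp(1) H])
  have conv: "(\<lambda>t. phi t k) \<longlonglongrightarrow> vst m k" if k: "k < Suc m" for k
  proof -
    have le: "norm (w t k) \<le> sqrt (nb (Suc m) (w t))" for t
    proof -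
      have "sqnorm2 (w t k) \<le> nb (Suc m) (w t)" unfolding nb_def
        by (rule member_le_sum) (use k in \<open>auto simp: sqnorm2_nonneg\<close>)
      hence "(norm (w t k))\<^sup>2 \<le> nb (Suc m) (w t)" by (simp add: sqnorm2_norm)
      thus ?thesis by (rule real_le_rsqrt)
    qed
    have "(\<lambda>t. sqrt (nb (Suc m) (w t))) \<longlonglongrightarrow> sqrt 0" by (intro tendsto_intros nb0)
    hence g0: "(\<lambda>t. sqrt (nb (Suc m) (w t))) \<longlonglongrightarrow> 0" by simp
    have ev: "eventually (\<lambda>t. norm (w t k) \<le> sqrt (nb (Suc m) (w t))) sequentially"
      using le by simp
    have "(\<lambda>t. w t k) \<longlonglongrightarrow> 0" by (rule Lim_null_comparison[OF ev g0])
    hence "(\<lambda>t. w t k + vst m k) \<longlonglongrightarrow> 0 + vst m k" by (intro tendsto_intros)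
    thus ?thesis unfolding w_def by simp
  qed
  have sq: "(\<lambda>t. sqnorm2 (psi_t (Suc m) a b c d \<xi> t (int k))) \<longlonglongrightarrow> sqnorm2 (vst m k)" if k: "k < Suc m" for k
  proof -
    have "(\<lambda>t. sqnorm2 (phi t k)) \<longlonglongrightarrow> sqnorm2 (vst m k)"
      unfolding sqnorm2_norm by (intro tendsto_intros conv k)
    thus ?thesis unfolding phi_def sqnorm2_phiw .
  qed
  have pos: "(\<Sum>k<Suc m. sqnorm2 (vst m k)) \<noteq> 0"
  proof -
    have "sqnorm2 (vst m 0) \<le> (\<Sum>k<Suc m. sqnorm2 (vst m k))"
      by (rule member_le_sum) (auto simp: sqnorm2_nonneg)
    moreover have "sqnorm2 (vst m 0) \<ge> 1" unfolding sqnorm2_def vst_R0 by simp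
    ultimately show ?thesis by simp
  qed
  have "(\<lambda>t. sqnorm2 (psi_t (Suc m) a b c d \<xi> t (int j)) / (\<Sum>k<Suc m. sqnorm2 (psi_t (Suc m) a b c d \<xi> t (int k))))
        \<longlonglongrightarrow> sqnorm2 (vst m j) / (\<Sum>k<Suc m. sqnorm2 (vst m k))"
    by (intro tendsto_divide tendsto_sum sq j pos) auto
  thus ?thesis unfolding comf_ratio_def .
qed

definition "rho m = pm * mm^m / (pp * mp^m)"
definition "um m k = V mm pm k - sc (rho m) (V mp pp k)"

lemma be_nz: "be m \<noteq> 0" unfolding be_def using pp_nz mp_nz Dm_nz[of m] by simp

lemma vst_um: "vst m k = sc (be m) (um m k)"
proof -
  have br: "be m * rho m = pm * mm^m / Dm m"
    unfolding be_def rho_def using pp_nz mp_nz Dm_nz[of m] by (simp add: field_simps)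
  have al: "al m = - (be m * rho m)" unfolding br al_def by simp
  show ?thesis unfolding vst_def comb_def um_def sc_def al by (simp add: algebra_simps)
qed

lemma sqnorm2_sc: "sqnorm2 (sc w v) = (cmod w)\<^sup>2 * sqnorm2 v"
  unfolding sqnorm2_norm norm_sc by (simp add: power_mult_distrib)

lemma tlim_u:
  assumes j: "j < Suc m"
  shows "(\<lambda>t. comf_ratio (Suc m) a b c d \<xi> j t) \<longlonglongrightarrow> sqnorm2 (um m j) / (\<Sum>k<Suc m. sqnorm2 (um m k))"
proof -
  define B where "B = (cmod (be m))\<^sup>2"
  have B0: "B \<noteq> 0" unfolding B_def using be_nz by simp
  have "sqnorm2 (vst m j) / (\<Sum>k<Suc m. sqnorm2 (vst m k)) = (B * sqnorm2 (um m j)) / (B * (\<Sum>k<Suc m. sqnorm2 (um m k)))"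
    unfolding vst_um sqnorm2_sc B_def[symmetric] by (simp only: sum_distrib_left)
  also have "\<dots> = sqnorm2 (um m j) / (\<Sum>k<Suc m. sqnorm2 (um m k))" using B0 by simp
  finally show ?thesis using tlim_v[OF j] by simp
qed

end




lemma sq_diff_bound:
  fixes x y :: "'a::real_normed_vector"
  shows "\<bar>(norm (x - y))\<^sup>2 - (norm x)\<^sup>2\<bar> \<le> norm y * (2 * norm x + norm y)"
proof -
  have h1: "\<bar>norm (x - y) - norm x\<bar> \<le> norm y"
    using norm_triangle_ineq3[of "x - y" x] by simp
  have h2: "norm (x - y) + norm x \<le> 2 * norm x + norm y"
    using norm_triangle_ineq4[of x y] by simp
  have "(norm (x - y))\<^sup>2 - (norm x)\<^sup>2 = (norm (x - y) - norm x) * (norm (x - y) + norm x)"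
    by (simp add: power2_eq_square algebra_simps)
  hence "\<bar>(norm (x - y))\<^sup>2 - (norm x)\<^sup>2\<bar> = \<bar>norm (x - y) - norm x\<bar> * (norm (x - y) + norm x)"
    by (simp add: abs_mult)
  also have "\<dots> \<le> norm y * (2 * norm x + norm y)"
    using h1 h2 by (intro mult_mono) auto
  finally show ?thesis .
qed

context qw
begin

lemma Mlim_u:
  "(\<lambda>m. sqnorm2 (um m j) / (\<Sum>k<Suc m. sqnorm2 (um m k))) \<longlonglongrightarrow> (1 - lam powi (-2)) * lam powi (-2 * int j)"
proof -
  define q where "q = 1 / \<bar>lam\<bar>"
  define r where "r = q\<^sup>2"
  have q0: "0 < q" "q < 1" unfolding q_def using lg by auto
  have r0: "0 < r" "r < 1" unfolding r_def using q0 by (auto simp: power_less_one_iff)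
  define Nm where "Nm = norm (pm / cp, 1::complex)"
  define Np where "Np = norm (pp / cp, 1::complex)"
  define G0 where "G0 = cmod pm / cmod pp"
  define G where "G = G0 * Np"
  have Nm0: "0 < Nm" unfolding Nm_def by (simp add: norm_Pair add_nonneg_pos)
  have Np0: "0 \<le> Np" unfolding Np_def by simp
  have G00: "0 \<le> G0" unfolding G0_def by simp
  have G_0: "0 \<le> G" unfolding G_def using G00 Np0 by simp
  define x where "x k = V mm pm k" for k
  define y where "y m k = sc (rho m) (V mp pp k)" for m k
  have um_xy: "um m k = x k - y m k" for m k unfolding um_def x_def y_def ..
  have nx: "norm (x k) = q^k * Nm" for k
    unfolding x_def norm_V mm_norm q_def Nm_def ..
  have lq1: "\<bar>lam\<bar> * q = 1" unfolding q_def using lg by simp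
  have rho_n: "cmod (rho m) = G0 * (q^m * q^m)" for m
  proof -
    have "cmod (rho m) = cmod pm * q^m / (cmod pp * \<bar>lam\<bar>^m)"
      unfolding rho_def by (simp add: norm_mult norm_divide norm_power mm_norm mp_norm q_def power_one_over)
    also have "\<bar>lam\<bar>^m * q^m = 1" using lq1 by (metis power_mult_distrib power_one)
    hence L: "\<bar>lam\<bar>^m = 1 / q^m" using q0 by (simp add: field_simps)
    have "cmod pm * q^m / (cmod pp * \<bar>lam\<bar>^m) = G0 * (q^m * q^m)"
      unfolding L G0_def using q0 by (simp add: field_simps)
    finally show ?thesis .
  qed
  have ny: "norm (y m k) = G0 * (q^m * q^m) * \<bar>lam\<bar>^k * Np" for m k
    unfolding y_def norm_sc norm_V rho_n mp_norm Np_def by simp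
  have ny_le: "norm (y m k) \<le> G * q^m" if "k \<le> m" for m k
  proof -
    have "\<bar>lam\<bar>^k \<le> \<bar>lam\<bar>^m" using that lg by (intro power_increasing) auto
    hence "q^m * \<bar>lam\<bar>^k \<le> q^m * \<bar>lam\<bar>^m" using q0 by (intro mult_left_mono) auto
    also have "q^m * \<bar>lam\<bar>^m = 1" using lq1 by (metis mult.commute power_mult_distrib power_one)
    finally have "q^m * \<bar>lam\<bar>^k \<le> 1" .
    hence "G0 * Np * q^m * (q^m * \<bar>lam\<bar>^k) \<le> G0 * Np * q^m * 1"
      using G00 Np0 q0 by (intro mult_left_mono) auto
    thus ?thesis unfolding ny G_def by (simp add: algebra_simps)
  qed
  have nx_le: "norm (x k) \<le> Nm" for k
  proof -
    have "q^k \<le> 1" using q0 by (simp add: power_le_one)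
    thus ?thesis unfolding nx using Nm0 by (simp add: mult_left_le_one_le)
  qed
    have rho0: "(\<lambda>m. rho m) \<longlonglongrightarrow> 0"
  proof -
    have "q * q < q * 1" by (rule mult_strict_left_mono) (use q0 in auto)
    hence qq1: "q * q < 1" using q0 by linarith
    have "norm (q * q) = q * q" using q0 by simp
    hence qq: "norm (q * q) < 1" using qq1 by simp
    have "(\<lambda>m. G0 * (q * q)^m) \<longlonglongrightarrow> G0 * 0"
      by (intro tendsto_intros LIMSEQ_power_zero qq)
    hence "(\<lambda>m. norm (rho m)) \<longlonglongrightarrow> 0" unfolding rho_n by (simp add: power_mult_distrib)
    thus ?thesis by (simp add: tendsto_norm_zero_iff)
  qed
  have "(\<lambda>m. x j - sc (rho m) (V mp pp j)) \<longlonglongrightarrow> x j - sc 0 (V mp pp j)"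
    unfolding sc_def by (intro tendsto_intros rho0)
  hence numc: "(\<lambda>m. um m j) \<longlonglongrightarrow> x j" unfolding um_def x_def sc_def by (simp add: zero_prod_def[symmetric])
  have num: "(\<lambda>m. sqnorm2 (um m j)) \<longlonglongrightarrow> r^j * Nm\<^sup>2"
  proof -
    have "(\<lambda>m. (norm (um m j))\<^sup>2) \<longlonglongrightarrow> (norm (x j))\<^sup>2" by (intro tendsto_intros numc)
    moreover have "(norm (x j))\<^sup>2 = r^j * Nm\<^sup>2" unfolding nx r_def by (simp add: power_mult_distrib power_mult[symmetric] mult.commute)
    ultimately show ?thesis unfolding sqnorm2_norm by simp
  qed
    have T: "(\<lambda>m. \<Sum>k<Suc m. sqnorm2 (x k)) \<longlonglongrightarrow> Nm\<^sup>2 / (1 - r)"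
  proof -
    have sx: "sqnorm2 (x k) = Nm\<^sup>2 * r^k" for k
      unfolding sqnorm2_norm nx r_def by (simp add: power_mult_distrib power_mult[symmetric] mult.commute)
    have "(\<lambda>n. \<Sum>k<n. r^k) \<longlonglongrightarrow> 1 / (1 - r)"
      using geometric_sums[of r] r0 unfolding sums_def by simp
    hence "(\<lambda>m. \<Sum>k<Suc m. r^k) \<longlonglongrightarrow> 1 / (1 - r)" by (rule LIMSEQ_Suc)
    hence "(\<lambda>m. Nm\<^sup>2 * (\<Sum>k<Suc m. r^k)) \<longlonglongrightarrow> Nm\<^sup>2 * (1 / (1 - r))" by (intro tendsto_intros)
    thus ?thesis unfolding sx by (simp only: sum_distrib_left times_divide_eq_right mult_1_right)
  qed
  have diff: "(\<lambda>m. (\<Sum>k<Suc m. sqnorm2 (um m k)) - (\<Sum>k<Suc m. sqnorm2 (x k))) \<longlonglongrightarrow> 0"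
  proof -
    have bnd: "norm ((\<Sum>k<Suc m. sqnorm2 (um m k)) - (\<Sum>k<Suc m. sqnorm2 (x k)))
               \<le> real (Suc m) * q^m * (G * (2 * Nm + G))" for m
    proof -
      have "norm ((\<Sum>k<Suc m. sqnorm2 (um m k)) - (\<Sum>k<Suc m. sqnorm2 (x k)))
          = \<bar>\<Sum>k<Suc m. (norm (x k - y m k))\<^sup>2 - (norm (x k))\<^sup>2\<bar>"
        unfolding um_xy sqnorm2_norm by (simp add: sum_subtractf)
      also have "\<dots> \<le> (\<Sum>k<Suc m. \<bar>(norm (x k - y m k))\<^sup>2 - (norm (x k))\<^sup>2\<bar>)" by (rule sum_abs)
      also have "\<dots> \<le> (\<Sum>k<Suc m. q^m * (G * (2 * Nm + G)))"
      proof (rule sum_mono)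
        fix k assume "k \<in> {..<Suc m}"
        hence km: "k \<le> m" by simp
        have qm1: "q^m \<le> 1" using q0 by (simp add: power_le_one)
        have a1: "norm (y m k) \<le> G * q^m" by (rule ny_le[OF km])
        have "G * q^m \<le> G * 1" by (rule mult_left_mono[OF qm1 G_0])
        hence a2: "norm (y m k) \<le> G" using a1 by linarith
        have "\<bar>(norm (x k - y m k))\<^sup>2 - (norm (x k))\<^sup>2\<bar> \<le> norm (y m k) * (2 * norm (x k) + norm (y m k))"
          by (rule sq_diff_bound)
        also have "\<dots> \<le> (G * q^m) * (2 * Nm + G)"
          using a1 a2 nx_le[of k] G_0 q0 by (intro mult_mono add_mono) auto
        finally show "\<bar>(norm (x k - y m k))\<^sup>2 - (norm (x k))\<^sup>2\<bar> \<le> q^m * (G * (2 * Nm + G))"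
          by (simp add: algebra_simps)
      qed
      also have "\<dots> = real (Suc m) * q^m * (G * (2 * Nm + G))" by simp
      finally show ?thesis .
    qed
    have "(\<lambda>n. real n * q^n) \<longlonglongrightarrow> 0"
      using powser_times_n_limit_0[of q] q0 by simp
    moreover have "(\<lambda>n. q^n) \<longlonglongrightarrow> 0" using q0 by (intro LIMSEQ_power_zero) simp
    ultimately have "(\<lambda>n. real n * q^n + q^n) \<longlonglongrightarrow> 0 + 0" by (intro tendsto_add)
    hence "(\<lambda>n. real (Suc n) * q^n) \<longlonglongrightarrow> 0" by (simp add: algebra_simps)
    hence g0: "(\<lambda>m. real (Suc m) * q^m * (G * (2 * Nm + G))) \<longlonglongrightarrow> 0 * (G * (2 * Nm + G))"
      by (intro tendsto_intros)
    show ?thesis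
      by (rule Lim_null_comparison[OF _ g0[simplified]]) (use bnd in simp)
  qed
  have den: "(\<lambda>m. \<Sum>k<Suc m. sqnorm2 (um m k)) \<longlonglongrightarrow> Nm\<^sup>2 / (1 - r)"
    by (rule Lim_transform[OF T diff])
  have den0: "Nm\<^sup>2 / (1 - r) \<noteq> 0" using Nm0 r0 by simp
  have lim: "(\<lambda>m. sqnorm2 (um m j) / (\<Sum>k<Suc m. sqnorm2 (um m k))) \<longlonglongrightarrow> (r^j * Nm\<^sup>2) / (Nm\<^sup>2 / (1 - r))"
    by (rule tendsto_divide[OF num den den0])
  have e1: "(r^j * Nm\<^sup>2) / (Nm\<^sup>2 / (1 - r)) = (1 - r) * r^j" using Nm0 r0 by (simp add: field_simps)
  have e2: "r = lam powi (-2)"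
    unfolding r_def q_def by (simp add: power_int_minus power_one_over power2_abs inverse_eq_divide)
  have e3: "(lam powi (-2)) ^ j = lam powi (-2 * int j)"
    by (simp only: power_int_mult power_int_of_nat)
  have val: "(r^j * Nm\<^sup>2) / (Nm\<^sup>2 / (1 - r)) = (1 - lam powi (-2)) * lam powi (-2 * int j)"
    unfolding e2[symmetric] using e1 e3 unfolding e2[symmetric] by (simp only:)
  show ?thesis using lim unfolding val .
qed

end



theorem theorem3p2:
  fixes a b c d :: complex and \<xi> \<omega> lam :: real
  assumes "unitary2 a b c d"
    and "a * b * c * d \<noteq> 0"
    and "\<omega> = Arg (a * d - b * c) / 2 + \<xi>"
    and "\<bar>cos \<omega>\<bar> > cmod a"
    and "lam\<^sup>2 - 2 * (cos \<omega> / cmod a) * lam + 1 = 0"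
    and "\<bar>lam\<bar> > 1"
  shows "\<forall>j::nat. \<exists>\<mu>::nat \<Rightarrow> real.
           (\<forall>M. j < M \<longrightarrow> (comf_ratio M a b c d \<xi> j \<longlonglongrightarrow> \<mu> M)) \<and>
           (\<mu> \<longlonglongrightarrow> (1 - lam powi (-2)) * lam powi (-2 * int j))"
proof -
  interpret Q: qw a b c d \<xi> \<omega> lam
    using assms by unfold_locales
  show ?thesis
  proof (intro allI)
    fix j :: nat
    define f where "f m = sqnorm2 (Q.um m j) / (\<Sum>k<Suc m. sqnorm2 (Q.um m k))" for m
    define \<mu> where "\<mu> M = f (M - 1)" for M
    show "\<exists>\<mu>::nat \<Rightarrow> real.
           (\<forall>M. j < M \<longrightarrow> (comf_ratio M a b c d \<xi> j \<longlonglongrightarrow> \<mu> M)) \<and>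
           (\<mu> \<longlonglongrightarrow> (1 - lam powi (-2)) * lam powi (-2 * int j))"
    proof (intro exI conjI allI impI)
      fix M assume jM: "j < M"
      then obtain m where m: "M = Suc m" by (cases M) auto
      have "(\<lambda>t. comf_ratio (Suc m) a b c d \<xi> j t) \<longlonglongrightarrow> f m"
        unfolding f_def by (rule Q.tlim_u) (use jM m in simp)
      thus "comf_ratio M a b c d \<xi> j \<longlonglongrightarrow> \<mu> M" unfolding m \<mu>_def by simp
    next
      have "(\<lambda>m. \<mu> (Suc m)) \<longlonglongrightarrow> (1 - lam powi (-2)) * lam powi (-2 * int j)"
        unfolding \<mu>_def f_def using Q.Mlim_u[of j] by simp
      thus "\<mu> \<longlonglongrightarrow> (1 - lam powi (-2)) * lam powi (-2 * int j)" by (rule LIMSEQ_imp_Suc)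
    qed
  qed
qed

end
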